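(* Consider a UVP instance with finite configuration set $\mathcal{X}\subset\mathbb{R}^d$, maximum per-configuration budget $T$, total budget $B$, and unknown value function $A$ satisfying the monotonicity and smoothness assumptions with parameter $\epsilon>0$. Let $k=\lfloor B/T\rfloor$ denote the number of configurations selected by Enhanced-FullCent, and let $r_k^\star$ be the optimal $k$-center radius of $\mathcal{X}$. Then Enhanced-FullCent (run with parameter $\epsilon$) achieves a $(1-2\epsilon r_k^\star)$-approximation for the UVP problem: its output $\hat{\mathbf{x}}$ satisfies $A(\hat{\mathbf{x}},T)\ge(1-2\epsilon r_k^\star)\max_{\mathbf{x}\in\mathcal{X}}A(\mathbf{x},T)$.
   Context: UVP problem: $A:\mathbb{R}^d\times[T]\to[0,1]$ is unknown ($[T]=\{1,\dots,T\}$); $\mathcal{X}=\{\mathbf{x}_1,\dots,\mathbf{x}_n\}$ is known; the goal is $\max_{b_1,\dots,b_n}\max_i A(\mathbf{x}_i,b_i)$ subject to $\sum_ib_i\le B$. Obtaining $A(\mathbf{x},b)$ requires evaluating $A(\mathbf{x},1),\dots,A(\mathbf{x},b)$ sequentially, costing $b$ units. Assumption 1: $b_1\le b_2\Rightarrow A(\mathbf{x},b_1)\le A(\mathbf{x},b_2)$. Assumption 2: for all $\mathbf{x}_i,\mathbf{x}_j\in\mathcal{X}$, $\min_{b\in[T]}A(\mathbf{x}_i,b)/A(\mathbf{x}_j,b)\ge1-\epsilon\|\mathbf{x}_i-\mathbf{x}_j\|_2$ (ratio $=1$ if both values are $0$, $+\infty$ if only the denominator is $0$). $r_k^\star=\min_{\mathcal{C}\subseteq\mathcal{X},|\mathcal{C}|=k}\max_{\mathbf{x}\in\mathcal{X}}\min_{\mathbf{c}\in\mathcal{C}}\|\mathbf{x}-\mathbf{c}\|_2$.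 For a center $\mathbf{c}$ with evaluated history, $H^{(\mathbf{c})}_{\mathrm{last}}$ is its most recently observed value. Enhanced k-center $\textsc{E-KCenter}(k,\mathcal{C},\mathcal{X},t,\epsilon)$: with $\mathcal{C}^{(0)}=\mathcal{C}$, for $i=1,\dots,k$: for each $\mathbf{x}\in\mathcal{X}\setminus\mathcal{C}^{(i-1)}$ and $\mathbf{c}\in\mathcal{C}^{(i-1)}$ compute $\eta^{(i)}_{\mathbf{c}}=\max_{\mathbf{c}'\in\mathcal{C}^{(i-1)}}H^{(\mathbf{c}')}_{\mathrm{last}}/H^{(\mathbf{c})}_{\mathrm{last}}$ and the enhanced distance $\tilde d^{(i)}(\mathbf{x},\mathbf{c})=\min\{\|\mathbf{x}-\mathbf{c}\|_2,\ \eta^{(i)}_{\mathbf{c}}\|\mathbf{x}-\mathbf{c}\|_2-\frac1\epsilon(\eta^{(i)}_{\mathbf{c}}-1)\}$; let $\Delta^{(i)}(\mathbf{x})=\min_{\mathbf{c}\in\mathcal{C}^{(i-1)}}\tilde d^{(i)}(\mathbf{x},\mathbf{c})$ (a minimum over the empty set is $+\infty$); choose $\mathbf{c}_i\in\arg\max_{\mathbf{x}\in\mathcal{X}\setminus\mathcal{C}^{(i-1)}}\Delta^{(i)}(\mathbf{x})$, evaluate $A(\mathbf{c}_i,1),\dots,A(\mathbf{c}_i,t)$, and set $\mathcal{C}^{(i)}=\mathcal{C}^{(i-1)}\cup\{\mathbf{c}_i\}$. Enhanced-FullCent$(B,T,\mathcal{X},\epsilon)$: with $k=\lfloor B/T\rfloor$,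 run $\textsc{E-KCenter}(k,\emptyset,\mathcal{X},T,\epsilon)$ to obtain centers $\mathcal{C}$ (each evaluated up to budget $T$) and return $\arg\max_{\mathbf{c}\in\mathcal{C}}A(\mathbf{c},T)$. *)

theory Defs
  imports "HOL-Analysis.Analysis" "HOL-Library.Extended_Real"
begin

definition uvp_ratio :: "real \<Rightarrow> real \<Rightarrow> ereal" where
  "uvp_ratio p q = (if q = 0 then (if p = 0 then 1 else \<infinity>) else ereal (p / q))"

definition uvp_monotone :: "('a \<Rightarrow> nat \<Rightarrow> real) \<Rightarrow> nat \<Rightarrow> bool" where
  "uvp_monotone A T \<longleftrightarrow>
     (\<forall>x b1 b2. b1 \<in> {1..T} \<longrightarrow> b2 \<in> {1..T} \<longrightarrow> b1 \<le> b2 \<longrightarrow> A x b1 \<le> A x b2)"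

definition uvp_smooth :: "('a::real_normed_vector \<Rightarrow> nat \<Rightarrow> real) \<Rightarrow> 'a set \<Rightarrow> nat \<Rightarrow> real \<Rightarrow> bool" where
  "uvp_smooth A X T eps \<longleftrightarrow>
     (\<forall>xi\<in>X. \<forall>xj\<in>X.
        (MIN b\<in>{1..T}. uvp_ratio (A xi b) (A xj b)) \<ge> ereal (1 - eps * norm (xi - xj)))"

definition kcenter_radius :: "'a::real_normed_vector set \<Rightarrow> nat \<Rightarrow> real" where
  "kcenter_radius X k =
     Min {Max ((\<lambda>x. Min ((\<lambda>c. norm (x - c)) ` C)) ` X) | C. C \<subseteq> X \<and> card C = k}"

definition enh_eta :: "('a \<Rightarrow> real) \<Rightarrow> 'a set \<Rightarrow> 'a \<Rightarrow> ereal" where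
  "enh_eta H C c = uvp_ratio (Max (H ` C)) (H c)"

text \<open>min{d, eta*d - (eta-1)/eps}; for eta = +infinity this is the limiting value
  (-infinity if d < 1/eps, and d otherwise).\<close>
definition enh_formula :: "real \<Rightarrow> ereal \<Rightarrow> real \<Rightarrow> ereal" where
  "enh_formula eps eta d =
     (if eta = \<infinity> then (if d < 1 / eps then -\<infinity> else ereal d)
      else min (ereal d) (ereal (real_of_ereal eta * d - (real_of_ereal eta - 1) / eps)))"

definition enh_dist :: "real \<Rightarrow> ('a::real_normed_vector \<Rightarrow> real) \<Rightarrow> 'a set \<Rightarrow> 'a \<Rightarrow> 'a \<Rightarrow> ereal" where
  "enh_dist eps H C x c = enh_formula eps (enh_eta H C c) (norm (x - c))"

text \<open>Delta(x) = min over centers of the enhanced distance (+infinity if C is empty).\<close>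
definition enh_Delta :: "real \<Rightarrow> ('a::real_normed_vector \<Rightarrow> real) \<Rightarrow> 'a set \<Rightarrow> 'a \<Rightarrow> ereal" where
  "enh_Delta eps H C x = (INF c\<in>C. enh_dist eps H C x c)"

text \<open>cs is a possible run (any tie-breaking) of E-KCenter(k, C0, X, t, eps), where
  H c is the last observed value of centre c (for new centres: A c t; for the
  initial centres: their given history).\<close>
definition ekcenter_run :: "nat \<Rightarrow> 'a set \<Rightarrow> 'a set \<Rightarrow> real \<Rightarrow> ('a::real_normed_vector \<Rightarrow> real) \<Rightarrow> 'a list \<Rightarrow> bool" where
  "ekcenter_run k C0 X eps H cs \<longleftrightarrow>
     length cs = k \<and>
     (\<forall>i<k. let C = C0 \<union> set (take i cs) in
        cs ! i \<in> X - C \<and>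
        (\<forall>x\<in>X - C. enh_Delta eps H C x \<le> enh_Delta eps H C (cs ! i)))"

definition enhanced_fullcent_output :: "nat \<Rightarrow> nat \<Rightarrow> 'a set \<Rightarrow> real \<Rightarrow> ('a::real_normed_vector \<Rightarrow> nat \<Rightarrow> real) \<Rightarrow> 'a \<Rightarrow> bool" where
  "enhanced_fullcent_output B T X eps A xhat \<longleftrightarrow>
     (\<exists>cs. ekcenter_run (B div T) {} X eps (\<lambda>c. A c T) cs \<and>
        xhat \<in> set cs \<and> (\<forall>c\<in>set cs. A c T \<le> A xhat T))"

end

theory Submission
  imports Defs
begin

lemma ereal_INF_gt:
  fixes f :: "'b \<Rightarrow> ereal" and a :: real
  assumes "finite C" "\<forall>c\<in>C. ereal a < f c"
  shows "ereal a < (INF c\<in>C. f c)"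
proof (cases "C = {}")
  case True then show ?thesis by (simp add: top_ereal_def)
next
  case False
  then have "(INF c\<in>C. f c) = Min (f ` C)"
    using assms(1) by (simp add: cInf_eq_Min)
  then show ?thesis using assms False by simp
qed

lemma enh_formula_le: "enh_formula eps eta d \<le> ereal d"
  unfolding enh_formula_def by auto

lemma enh_key:
  fixes eps d h m a r :: real
  assumes eps: "eps > 0" and h0: "h \<ge> 0" and hm: "h \<le> m"
    and ma: "m < (1 - 2*eps*r) * a" and a: "a > 0" and ha: "h \<ge> (1 - eps*d)*a"
  shows "enh_formula eps (uvp_ratio m h) d > ereal (2*r)"
proof -
  have d2r: "d > 2*r"
  proof -
    have "(1 - eps*d)*a < (1 - 2*eps*r) * a" using ha hm ma by linarith
    then have "1 - eps*d < 1 - 2*eps*r" using a by (simp add: mult_less_cancel_right)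
    then have "eps * (2*r) < eps * d" by (simp add: algebra_simps)
    then show ?thesis using eps by simp
  qed
  show ?thesis
  proof (cases "h = 0")
    case True
    have "(1 - eps*d) * a \<le> 0" using ha True by simp
    then have "1 - eps*d \<le> 0" using a by (simp add: mult_le_0_iff)
    then have "d \<ge> 1/eps" using eps by (simp add: field_simps)
    then show ?thesis using True d2r
      by (auto simp: enh_formula_def uvp_ratio_def)
  next
    case False
    then have hp: "h > 0" using h0 by simp
    define eta where "eta = m / h"
    have eta0: "eta \<ge> 0" using hp hm unfolding eta_def by simp
    have "1 - eps*d \<le> h / a" using ha a by (simp add: field_simps)
    then have "eta * (1 - eps*d) \<le> eta * (h / a)" using eta0 by (rule mult_left_mono)
    also have "eta * (h / a) = m / a" using hp unfolding eta_def by simp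
    also have "m / a < 1 - 2*eps*r" using ma a by (simp add: field_simps)
    finally have e1: "eta * (1 - eps*d) < 1 - 2*eps*r" .
    have "eta * d - (eta - 1) / eps = (1 - eta * (1 - eps*d)) / eps"
      using eps by (simp add: field_simps)
    also have "(1 - eta * (1 - eps*d)) / eps > (2*eps*r) / eps"
      using e1 eps by (intro divide_strict_right_mono) auto
    also have "(2*eps*r) / eps = 2*r" using eps by simp
    finally have "eta * d - (eta - 1) / eps > 2*r" .
    then show ?thesis using hp d2r
      by (simp add: enh_formula_def uvp_ratio_def eta_def[symmetric])
  qed
qed

theorem theorem6:
  fixes X :: "'a::euclidean_space set" and A :: "'a \<Rightarrow> nat \<Rightarrow> real"
    and B T :: nat and eps :: real and xhat :: 'a
  assumes "finite X" and "X \<noteq> {}"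
    and "T \<ge> 1"
    and "1 \<le> B div T" and "B div T \<le> card X"
    and "eps > 0"
    and "\<forall>x b. b \<in> {1..T} \<longrightarrow> 0 \<le> A x b \<and> A x b \<le> 1"
    and "uvp_monotone A T"
    and "uvp_smooth A X T eps"
    and "enhanced_fullcent_output B T X eps A xhat"
  shows "A xhat T \<ge> (1 - 2 * eps * kcenter_radius X (B div T)) * (MAX x\<in>X. A x T)"
proof -
  define k where "k = B div T"
  define H where "H = (\<lambda>c. A c T)"
  define r where "r = kcenter_radius X k"
  note fin = assms(1)
  have Tin: "T \<in> {1..T}" using assms(3) by simp
  have A0: "\<And>x. 0 \<le> A x T" using assms(7) Tin by blast
  obtain cs where run: "ekcenter_run k {} X eps H cs" and xh: "xhat \<in> set cs"
    and best: "\<forall>c\<in>set cs. A c T \<le> A xhat T"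
    using assms(10) unfolding enhanced_fullcent_output_def k_def H_def by blast
  have len: "length cs = k" using run unfolding ekcenter_run_def by simp
  have step: "\<And>i. i < k \<Longrightarrow> cs ! i \<in> X - set (take i cs) \<and>
      (\<forall>x\<in>X - set (take i cs). enh_Delta eps H (set (take i cs)) x
          \<le> enh_Delta eps H (set (take i cs)) (cs ! i))"
    using run unfolding ekcenter_run_def Let_def by simp
  have csX: "set cs \<subseteq> X"
  proof
    fix c assume "c \<in> set cs"
    then obtain i where "i < k" "c = cs ! i" using len by (metis in_set_conv_nth)
    then show "c \<in> X" using step by blast
  qed
  have dist: "distinct cs"
  proof -
    have "\<And>i. i < length cs \<Longrightarrow> cs ! i \<notin> set (take i cs)" using step len by blast
    have mem: "\<And>i j. i < length cs \<Longrightarrow> j < i \<Longrightarrow> cs ! j \<in> set (take i cs)"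
    proof -
      fix i j assume "i < length cs" "j < i"
      then have "take i cs ! j = cs ! j" "j < length (take i cs)" by simp_all
      then show "cs ! j \<in> set (take i cs)" by (metis nth_mem)
    qed
    show ?thesis unfolding distinct_conv_nth
    proof (intro allI impI)
      fix i j assume "i < length cs" "j < length cs" "i \<noteq> j"
      then show "cs ! i \<noteq> cs ! j"
        using mem \<open>\<And>i. i < length cs \<Longrightarrow> cs ! i \<notin> set (take i cs)\<close>
        by (metis nat_neq_iff)
    qed
  qed
  define S where "S = {Max ((\<lambda>x. Min ((\<lambda>c. norm (x - c)) ` C)) ` X) | C. C \<subseteq> X \<and> card C = k}"
  have Sfin: "finite S"
  proof -
    have "S \<subseteq> (\<lambda>C. Max ((\<lambda>x. Min ((\<lambda>c. norm (x - c)) ` C)) ` X)) ` Pow X"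
      unfolding S_def by auto
    then show ?thesis using fin by (meson finite_Pow_iff finite_imageI finite_subset)
  qed
  obtain C0 where "C0 \<subseteq> X" "card C0 = k"
    using assms(5) unfolding k_def by (meson obtain_subset_with_card_n)
  then have Sne: "S \<noteq> {}" unfolding S_def by blast
  have "r \<in> S" unfolding r_def kcenter_radius_def S_def[symmetric] using Sfin Sne by simp
  then obtain Cs where Cs: "Cs \<subseteq> X" "card Cs = k"
    and rdef: "r = Max ((\<lambda>x. Min ((\<lambda>c. norm (x - c)) ` Cs)) ` X)"
    unfolding S_def by blast
  have Csfin: "finite Cs" using Cs(1) fin finite_subset by blast
  have Csne: "Cs \<noteq> {}" using Cs(2) assms(4) k_def by auto
  have cover: "\<And>p. p \<in> X \<Longrightarrow> \<exists>c\<in>Cs. norm (p - c) \<le> r"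
  proof -
    fix p assume p: "p \<in> X"
    have "Min ((\<lambda>c. norm (p - c)) ` Cs) \<le> r" unfolding rdef using fin p by simp
    moreover have "Min ((\<lambda>c. norm (p - c)) ` Cs) \<in> (\<lambda>c. norm (p - c)) ` Cs"
      using Csfin Csne by (intro Min_in) auto
    ultimately show "\<exists>c\<in>Cs. norm (p - c) \<le> r" by auto
  qed
  have r0: "r \<ge> 0"
  proof -
    obtain p where "p \<in> X" using assms(2) by blast
    then obtain c where "c \<in> Cs" "norm (p - c) \<le> r" using cover by blast
    then show ?thesis by (meson norm_ge_zero order_trans)
  qed
  obtain xs where xsX: "xs \<in> X" and xsmax: "A xs T = (MAX x\<in>X. A x T)"
    using fin assms(2) by (metis (mono_tags, lifting) Max_in finite_imageI image_iff image_is_empty)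
  have smooth: "\<And>y. y \<in> X \<Longrightarrow> A xs T > 0 \<Longrightarrow> A y T \<ge> (1 - eps * norm (y - xs)) * A xs T"
  proof -
    fix y assume y: "y \<in> X" and pos: "A xs T > 0"
    have "ereal (1 - eps * norm (y - xs)) \<le> (MIN b\<in>{1..T}. uvp_ratio (A y b) (A xs b))"
      using assms(9) y xsX unfolding uvp_smooth_def by blast
    also have "\<dots> \<le> uvp_ratio (A y T) (A xs T)"
      using Tin by (intro Min_le) auto
    also have "\<dots> = ereal (A y T / A xs T)" using pos by (simp add: uvp_ratio_def)
    finally have "1 - eps * norm (y - xs) \<le> A y T / A xs T" by simp
    then show "A y T \<ge> (1 - eps * norm (y - xs)) * A xs T" using pos by (simp add: field_simps)
  qed
  show ?thesis
  proof (rule ccontr)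
    assume "\<not> ?thesis"
    then have lt: "A xhat T < (1 - 2*eps*r) * A xs T"
      unfolding r_def k_def xsmax by simp
    have pos: "A xs T > 0"
    proof (rule ccontr)
      assume "\<not> A xs T > 0"
      then have "A xs T = 0" using A0[of xs] by simp
      then show False using lt A0[of xhat] by simp
    qed
    have far: "\<And>c. c \<in> set cs \<Longrightarrow> norm (c - xs) > 2*r"
    proof -
      fix c assume c: "c \<in> set cs"
      have "(1 - eps * norm (c - xs)) * A xs T < (1 - 2*eps*r) * A xs T"
        using smooth[OF _ pos, of c] c csX best lt by force
      then have "1 - eps * norm (c - xs) < 1 - 2*eps*r" using pos by (simp add: mult_less_cancel_right)
      then have "eps * (2*r) < eps * norm (c - xs)" by (simp add: algebra_simps)
      then show "norm (c - xs) > 2*r" using assms(6) by simp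
    qed
    have xsnot: "xs \<notin> set cs" using far r0 by fastforce
    have Dxs: "\<And>i. i < k \<Longrightarrow> ereal (2*r) < enh_Delta eps H (set (take i cs)) xs"
    proof -
      fix i assume "i < k"
      let ?C = "set (take i cs)"
      show "ereal (2*r) < enh_Delta eps H ?C xs"
        unfolding enh_Delta_def
      proof (rule ereal_INF_gt)
        show "finite ?C" by simp
        show "\<forall>c\<in>?C. ereal (2*r) < enh_dist eps H ?C xs c"
        proof
          fix c assume c: "c \<in> ?C"
          have ccs: "c \<in> set cs" using c set_take_subset by fast
          have Cfin: "finite ?C" by simp
          have hm: "H c \<le> Max (H ` ?C)" using c Cfin by simp
          have mx: "Max (H ` ?C) \<le> A xhat T"
          proof (rule Max.boundedI)
            show "finite (H ` ?C)" using Cfin by simp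
            show "H ` ?C \<noteq> {}"
            proof
              assume "H ` ?C = {}"
              then have "?C = {}" by (rule image_is_empty[THEN iffD1])
              with c show False by simp
            qed
            show "\<And>a. a \<in> H ` ?C \<Longrightarrow> a \<le> A xhat T"
              using best set_take_subset[of i cs] by (auto simp: H_def)
          qed
          have "ereal (2*r) < enh_formula eps (uvp_ratio (Max (H ` ?C)) (H c)) (norm (xs - c))"
          proof (rule enh_key[OF assms(6)])
            show "0 \<le> H c" using A0 H_def by simp
            show "H c \<le> Max (H ` ?C)" by (rule hm)
            show "Max (H ` ?C) < (1 - 2*eps*r) * A xs T" using mx lt by linarith
            show "0 < A xs T" by (rule pos)
            have "(1 - eps * norm (c - xs)) * A xs T \<le> H c"
              using smooth[OF _ pos, of c] ccs csX H_def by auto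
            then show "(1 - eps * norm (xs - c)) * A xs T \<le> H c" by (simp add: norm_minus_commute)
          qed
          then show "ereal (2*r) < enh_dist eps H ?C xs c"
            by (simp add: enh_dist_def enh_eta_def)
        qed
      qed
    qed
    have pair: "\<And>i j. i < k \<Longrightarrow> j < i \<Longrightarrow> norm (cs ! i - cs ! j) > 2*r"
    proof -
      fix i j assume i: "i < k" and ji: "j < i"
      let ?C = "set (take i cs)"
      have xsin: "xs \<in> X - ?C" using xsX xsnot set_take_subset[of i cs] by blast
      have "ereal (2*r) < enh_Delta eps H ?C xs" using Dxs i by blast
      also have "\<dots> \<le> enh_Delta eps H ?C (cs ! i)" using step[OF i] xsin by blast
      also have "\<dots> \<le> enh_dist eps H ?C (cs ! i) (cs ! j)"
        unfolding enh_Delta_def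
      proof (rule INF_lower)
        have "take i cs ! j = cs ! j" "j < length (take i cs)" using ji i len by simp_all
        then show "cs ! j \<in> ?C" by (metis nth_mem)
      qed
      also have "\<dots> \<le> ereal (norm (cs ! i - cs ! j))"
        unfolding enh_dist_def by (rule enh_formula_le)
      finally show "norm (cs ! i - cs ! j) > 2*r" by simp
    qed
    define P where "P = insert xs (set cs)"
    have Pfin: "finite P" unfolding P_def by simp
    have cardP: "card P = Suc k" unfolding P_def using xsnot dist len by (simp add: distinct_card)
    have PX: "P \<subseteq> X" unfolding P_def using xsX csX by blast
    have Psep: "\<And>p q. p \<in> P \<Longrightarrow> q \<in> P \<Longrightarrow> p \<noteq> q \<Longrightarrow> norm (p - q) > 2*r"
    proof -
      have cc: "\<And>p q. p \<in> set cs \<Longrightarrow> q \<in> set cs \<Longrightarrow> p \<noteq> q \<Longrightarrow> norm (p - q) > 2*r"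
      proof -
        fix p q assume p: "p \<in> set cs" and q: "q \<in> set cs" and pq: "p \<noteq> q"
        obtain i where i: "i < k" "p = cs ! i" using p len by (metis in_set_conv_nth)
        obtain j where j: "j < k" "q = cs ! j" using q len by (metis in_set_conv_nth)
        have "i \<noteq> j" using i j pq by blast
        then show "norm (p - q) > 2*r"
        proof (cases "j < i")
          case True then show ?thesis using pair i j by simp
        next
          case False then have "i < j" using \<open>i \<noteq> j\<close> by simp
          then show ?thesis using pair[of j i] i j by (simp add: norm_minus_commute)
        qed
      qed
      fix p q assume "p \<in> P" "q \<in> P" "p \<noteq> q"
      then show "norm (p - q) > 2*r" unfolding P_def
        using cc far by (auto simp: norm_minus_commute)
    qed
    define f where "f = (\<lambda>p. SOME c. c \<in> Cs \<and> norm (p - c) \<le> r)"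
    have f: "\<And>p. p \<in> P \<Longrightarrow> f p \<in> Cs \<and> norm (p - f p) \<le> r"
    proof -
      fix p assume "p \<in> P"
      then have "\<exists>c. c \<in> Cs \<and> norm (p - c) \<le> r" using cover PX by blast
      then show "f p \<in> Cs \<and> norm (p - f p) \<le> r" unfolding f_def by (rule someI_ex)
    qed
    have "\<not> inj_on f P"
    proof
      assume "inj_on f P"
      moreover have "f ` P \<subseteq> Cs" using f by blast
      ultimately have "card P \<le> card Cs" using Csfin by (rule card_inj_on_le)
      then show False using cardP Cs(2) by simp
    qed
    then obtain p q where pq: "p \<in> P" "q \<in> P" "p \<noteq> q" "f p = f q"
      unfolding inj_on_def by blast
    have "p - q = (p - f p) - (q - f q)" using pq(4) by simp
    then have "norm (p - q) \<le> norm (p - f p) + norm (q - f q)"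
      using norm_triangle_ineq4[of "p - f p" "q - f q"] by simp
    also have "\<dots> \<le> 2*r" using f[OF pq(1)] f[OF pq(2)] by linarith
    finally show False using Psep[OF pq(1-3)] by simp
  qed
qed

end
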